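(* Let $n\geq3$ be an integer and $f\in\mathcal A_h(\mathbb F_n)$. For every $(\theta,\omega)\in\mathbb F_n$, the map $t\in(0,+\infty)\mapsto(f\circ\delta_t)(\theta,\omega)$ is a polynomial of degree $\leq n$. Denoting its coefficients by $f_j(\theta,\omega):=\frac1{j!}\frac{d^j}{dt^j}(f\circ\delta_t)(\theta,\omega)\big|_{t=0}$, $j\in\{0,\dots,n\}$, we have: (i) $f_0,\dots,f_n\in\mathcal A_h(\mathbb F_n)$; (ii) $f=\sum_{j=0}^n f_j$; (iii) for each $k\in\{0,\dots,\lfloor n/2\rfloor\}$ there are $a_I\in\mathbb R$, $I\in\mathcal I_k^n$, such that $f_{2k}(\theta,\omega)=\sum_{I\in\mathcal I^n_k}a_I\,\omega_I$ for all $(\theta,\omega)\in\mathbb F_n$; (iv) for each $k\in\{0,\dots,\lfloor (n-1)/2\rfloor\}$ there are linear maps $b_I:\Lambda^1(\mathbb R^n)\to\mathbb R$, $I\in\mathcal I_k^n$, such that $f_{2k+1}(\theta,\omega)=\sum_{I\in\mathcal I_k^n}b_I(\theta)\,\omega_I$ for all $(\theta,\omega)\in\mathbb F_n$.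
   Context: $\mathbb F_n=\Lambda^1(\mathbb R^n)\times\Lambda^2(\mathbb R^n)$ ($\Lambda^k(\mathbb R^n)$ = alternating $k$-forms on $\mathbb R^n$) with group law $(\theta,\omega)\cdot(\theta',\omega')=(\theta+\theta',\omega+\omega'+\theta\wedge\theta')$, and $\delta_t(\theta,\omega)=(t\theta,t^2\omega)$ for $t>0$. $f\in\mathcal A_h(\mathbb F_n)$ means that for all $(\theta,\omega)\in\mathbb F_n$, $\theta'\in\Lambda^1(\mathbb R^n)$, $t\in\mathbb R\mapsto f((\theta,\omega)\cdot(t\theta',0))$ is affine. Fix a basis $dx_1,\dots,dx_n$ of $\Lambda^1(\mathbb R^n)$ and write $\omega=\sum_{1\le\alpha<\beta\le n}\omega_{\alpha\beta}\,dx_\alpha\wedge dx_\beta$. Set $\mathcal I^n_0=\{\emptyset\}$ and, for $k\geq1$, $\mathcal I^n_k$ the set of $k$-tuples $I=(\alpha_1\beta_1,\dots,\alpha_k\beta_k)$ of pairs with $1\le\alpha_i<\beta_i\le n$, strictly increasing in lexicographic order, and with $\{\alpha_i,\beta_i\}\cap\{\alpha_j,\beta_j\}=\emptyset$ for $i\ne j$. Set $\omega_\emptyset=1$ and $\omega_I=\omega_{\alpha_1\beta_1}\cdots\omega_{\alpha_k\beta_k}$. *)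

theory Defs
  imports Main "HOL.Real"
begin

text \<open>Coordinates w.r.t. the basis dx_1,...,dx_n: a 1-form theta is the function
  i \<mapsto> theta_i, supported in {1..n}; a 2-form omega is the function
  (a,b) \<mapsto> omega_ab, supported on pairs 1 \<le> a < b \<le> n.\<close>

type_synonym form1 = "nat \<Rightarrow> real"
type_synonym form2 = "nat \<Rightarrow> nat \<Rightarrow> real"
type_synonym fpt = "form1 \<times> form2"

definition L1 :: "nat \<Rightarrow> form1 set" where
  "L1 n = {\<theta>. \<forall>i. \<theta> i \<noteq> 0 \<longrightarrow> 1 \<le> i \<and> i \<le> n}"

definition L2 :: "nat \<Rightarrow> form2 set" where
  "L2 n = {\<omega>. \<forall>a b. \<omega> a b \<noteq> 0 \<longrightarrow> 1 \<le> a \<and> a < b \<and> b \<le> n}"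

definition Fn :: "nat \<Rightarrow> fpt set" where
  "Fn n = L1 n \<times> L2 n"

definition wedge :: "form1 \<Rightarrow> form1 \<Rightarrow> form2" where
  "wedge \<theta> \<theta>' = (\<lambda>a b. if a < b then \<theta> a * \<theta>' b - \<theta> b * \<theta>' a else 0)"

definition fmult :: "fpt \<Rightarrow> fpt \<Rightarrow> fpt" where
  "fmult p q = ((\<lambda>i. fst p i + fst q i), (\<lambda>a b. snd p a b + snd q a b + wedge (fst p) (fst q) a b))"

definition dil :: "real \<Rightarrow> fpt \<Rightarrow> fpt" where
  "dil t p = ((\<lambda>i. t * fst p i), (\<lambda>a b. t^2 * snd p a b))"

definition Ah :: "nat \<Rightarrow> (fpt \<Rightarrow> real) \<Rightarrow> bool" where
  "Ah n f \<longleftrightarrow> (\<forall>p \<in> Fn n. \<forall>\<theta>' \<in> L1 n. \<exists>c0 c1. \<forall>t::real.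
      f (fmult p ((\<lambda>i. t * \<theta>' i), (\<lambda>a b. 0))) = c0 + c1 * t)"

definition lin1 :: "nat \<Rightarrow> (form1 \<Rightarrow> real) \<Rightarrow> bool" where
  "lin1 n b \<longleftrightarrow> (\<forall>\<theta> \<in> L1 n. \<forall>\<theta>' \<in> L1 n. \<forall>c::real.
      b (\<lambda>i. \<theta> i + \<theta>' i) = b \<theta> + b \<theta>' \<and> b (\<lambda>i. c * \<theta> i) = c * b \<theta>)"

definition lexless :: "nat \<times> nat \<Rightarrow> nat \<times> nat \<Rightarrow> bool" where
  "lexless p q \<longleftrightarrow> fst p < fst q \<or> (fst p = fst q \<and> snd p < snd q)"

definition Iset :: "nat \<Rightarrow> nat \<Rightarrow> (nat \<times> nat) list set" where
  "Iset n k = {I. length I = k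
      \<and> (\<forall>p \<in> set I. 1 \<le> fst p \<and> fst p < snd p \<and> snd p \<le> n)
      \<and> sorted_wrt lexless I
      \<and> (\<forall>i < k. \<forall>j < k. i \<noteq> j \<longrightarrow>
            {fst (I!i), snd (I!i)} \<inter> {fst (I!j), snd (I!j)} = {})}"

definition omegaI :: "form2 \<Rightarrow> (nat \<times> nat) list \<Rightarrow> real" where
  "omegaI \<omega> I = prod_list (map (\<lambda>p. \<omega> (fst p) (snd p)) I)"

end

theory Submission
  imports Defs Complex_Main "HOL-Library.Product_Lexorder"
begin

section \<open>Abstract Heisenberg lemma\<close>

lemma h1c:
  fixes g :: "real \<Rightarrow> real \<Rightarrow> real \<Rightarrow> real"
  assumes HL: "\<And>s0 t0 z0 \<alpha> \<beta> u. g (s0+u*\<alpha>) (t0+u*\<beta>) (z0+u*(s0*\<beta>-t0*\<alpha>))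
        = (1-u)*g s0 t0 z0 + u*g (s0+\<alpha>) (t0+\<beta>) (z0+(s0*\<beta>-t0*\<alpha>))"
  and HZ: "\<And>s t z u. g s t (z+u) = (1-u)*g s t z + u*g s t (z+1)"
  shows "g s t z = g 0 0 0 + s*(g 1 0 0 - g 0 0 0) + t*(g 0 1 0 - g 0 0 0) + z*(g 0 0 1 - g 0 0 0)"
proof -
  define G where "G s t w = g s t (w - s*t)" for s t w
  have F1: "G s t w = (1-s)*G 0 t w + s*G 1 t w" for s t w
    using HL[of 0 s 1 t 0 w] by (simp add: G_def algebra_simps)
  have F2: "G s t w = (1-w)*G s t 0 + w*G s t 1" for s t w
    using HZ[of s t "-s*t" w] by (simp add: G_def algebra_simps)
  have F3: "G s t w = (1-s)*(1-w)*G 0 t 0 + s*(1-w)*G 1 t 0 + (1-s)*w*G 0 t 1 + s*w*G 1 t 1" for s t w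
    using F1[of s t w] F2[of 0 t w] F2[of 1 t w] by (simp add: algebra_simps)
  have F4: "G s0 (t0+u) (w0+2*s0*u) = (1-u)*G s0 t0 w0 + u*G s0 (t0+1) (w0+2*s0)" for s0 t0 w0 u
    using HL[of s0 u 0 t0 1 "w0 - s0*t0"] by (simp add: G_def algebra_simps)
  have F5: "G (u*\<alpha>) (u*\<beta>) (u*u*\<alpha>*\<beta>) = (1-u)*G 0 0 0 + u*G \<alpha> \<beta> (\<alpha>*\<beta>)" for u \<alpha> \<beta>
    using HL[of 0 u \<alpha> 0 \<beta> 0] by (simp add: G_def algebra_simps)
  have A0: "G 0 t 0 = (1-t)*G 0 0 0 + t*G 0 1 0" for t using F4[of 0 0 t 0] by simp
  have A1: "G 0 t 1 = (1-t)*G 0 0 1 + t*G 0 1 1" for t using F4[of 0 0 t 1] by simp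
  have E1: "(1-2*t)*G 1 t 0 + 2*t*G 1 t 1 = (1-t)*G 1 0 0 + t*G 1 1 2" for t
    using F4[of 1 0 t 0] F2[of 1 t "2*t"] by simp
  have E2: "(-2*t)*G 1 t 0 + (1+2*t)*G 1 t 1 = (1-t)*G 1 0 1 + t*G 1 1 3" for t
    using F4[of 1 0 t 1] F2[of 1 t "1+2*t"] by (simp add: algebra_simps)
  have B0: "G 1 t 0 = (1+2*t)*((1-t)*G 1 0 0 + t*G 1 1 2) - 2*t*((1-t)*G 1 0 1 + t*G 1 1 3)" for t
  proof -
    have "G 1 t 0 = (1+2*t)*((1-2*t)*G 1 t 0 + 2*t*G 1 t 1) - 2*t*((-2*t)*G 1 t 0 + (1+2*t)*G 1 t 1)"
      by (simp add: algebra_simps)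
    then show ?thesis using E1[of t] E2[of t] by simp
  qed
  have B1: "G 1 t 1 = 2*t*((1-t)*G 1 0 0 + t*G 1 1 2) + (1-2*t)*((1-t)*G 1 0 1 + t*G 1 1 3)" for t
  proof -
    have "G 1 t 1 = 2*t*((1-2*t)*G 1 t 0 + 2*t*G 1 t 1) + (1-2*t)*((-2*t)*G 1 t 0 + (1+2*t)*G 1 t 1)"
      by (simp add: algebra_simps)
    then show ?thesis using E1[of t] E2[of t] by simp
  qed
  define c000 where "c000 = G 0 0 0"
  define c010 where "c010 = G 0 1 0"
  define c001 where "c001 = G 0 0 1"
  define c011 where "c011 = G 0 1 1"
  define c100 where "c100 = G 1 0 0"
  define c112 where "c112 = G 1 1 2"
  define c101 where "c101 = G 1 0 1"
  define c113 where "c113 = G 1 1 3"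
  define P where "P s t w = (1-s)*(1-w)*((1-t)*c000 + t*c010)
     + s*(1-w)*((1+2*t)*((1-t)*c100 + t*c112) - 2*t*((1-t)*c101 + t*c113))
     + (1-s)*w*((1-t)*c001 + t*c011)
     + s*w*(2*t*((1-t)*c100 + t*c112) + (1-2*t)*((1-t)*c101 + t*c113))" for s t w
  have GP: "G s t w = P s t w" for s t w
    unfolding P_def c000_def c010_def c001_def c011_def c100_def c112_def c101_def c113_def
    using F3[of s t w] A0[of t] A1[of t] B0[of t] B1[of t] by simp
  have K4: "P (-1) u (-2*u) = (1-u)*P (-1) 0 0 + u*P (-1) 1 (-2)" for u
    using F4[of "-1" 0 u 0] by (simp add: GP)
  have K5: "P u u (u*u) = (1-u)*P 0 0 0 + u*P 1 1 1" for u
    using F5[of u 1 1] by (simp add: GP)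
  have K6: "P u (-u) (-(u*u)) = (1-u)*P 0 0 0 + u*P 1 (-1) (-1)" for u
    using F5[of u 1 "-1"] by (simp add: GP)
  have i: "P (-1) (-1) 2 = 2*P (-1) 0 0 - P (-1) 1 (-2)"
     "P (-1) 2 (-4) = - P (-1) 0 0 + 2*P (-1) 1 (-2)"
     "P (-1) (-1) 1 = 2*P 0 0 0 - P 1 1 1"
     "P 2 2 4 = - P 0 0 0 + 2*P 1 1 1"
     "P (-2) (-2) 4 = 3*P 0 0 0 - 2*P 1 1 1"
     "P 3 3 9 = -2* P 0 0 0 + 3*P 1 1 1"
     "P (-1) 1 (-1) = 2*P 0 0 0 - P 1 (-1) (-1)"
     "P 2 (-2) (-4) = - P 0 0 0 + 2*P 1 (-1) (-1)"
     "P (-2) 2 (-4) = 3*P 0 0 0 - 2*P 1 (-1) (-1)"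
     "P 3 (-3) (-9) = -2* P 0 0 0 + 3*P 1 (-1) (-1)"
    using K4[of "-1"] K4[of 2] K5[of "-1"] K5[of 2] K5[of "-2"] K5[of 3]
       K6[of "-1"] K6[of 2] K6[of "-2"] K6[of 3] by simp_all
  note j = i[unfolded P_def, simplified]
  have r1: "c011 = c010 + c001 - c000" using j by linarith
  have r2: "c101 = c100 + c001 - c000" using j by linarith
  have r3: "c112 = c010 + c100 + c001 - 2*c000" using j by linarith
  have r4: "c113 = c010 + c100 + 2*c001 - 3*c000" using j by linarith
  have "g s t z = G s t (z + s*t)" by (simp add: G_def)
  also have "\<dots> = P s t (z + s*t)" by (rule GP)
  also have "\<dots> = c000 + s*(c100 - c000) + t*(c010 - c000) + z*(c001 - c000)"
    unfolding P_def r1 r2 r3 r4 by (simp add: algebra_simps)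
  finally show ?thesis
    by (simp add: c000_def c100_def c010_def c001_def G_def)
qed

lemma L1_iff: "\<theta> \<in> L1 n \<longleftrightarrow> (\<forall>i. (i < 1 \<or> n < i) \<longrightarrow> \<theta> i = 0)"
  unfolding L1_def by (auto simp: not_less) (metis Suc_leI gr0I)+

lemma L2_iff: "\<omega> \<in> L2 n \<longleftrightarrow> (\<forall>a b. \<not>(1 \<le> a \<and> a < b \<and> b \<le> n) \<longrightarrow> \<omega> a b = 0)"
  unfolding L2_def by auto

lemma L1_comb[simp]: "\<theta> \<in> L1 n \<Longrightarrow> x \<in> L1 n \<Longrightarrow> (\<lambda>i. \<theta> i + c * x i) \<in> L1 n"
  by (auto simp: L1_iff)
lemma L1_add[simp]: "\<theta> \<in> L1 n \<Longrightarrow> x \<in> L1 n \<Longrightarrow> (\<lambda>i. \<theta> i + x i) \<in> L1 n"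
  by (auto simp: L1_iff)
lemma L1_lin[simp]: "\<theta> \<in> L1 n \<Longrightarrow> x \<in> L1 n \<Longrightarrow> (\<lambda>i. d * \<theta> i + c * x i) \<in> L1 n"
  by (auto simp: L1_iff)
lemma L1_smul[simp]: "x \<in> L1 n \<Longrightarrow> (\<lambda>i. c * x i) \<in> L1 n"
  by (auto simp: L1_iff)
lemma L1_zero[simp]: "(\<lambda>i. 0) \<in> L1 n"
  by (auto simp: L1_iff)

lemma wedge_L2[simp]: "x \<in> L1 n \<Longrightarrow> y \<in> L1 n \<Longrightarrow> wedge x y \<in> L2 n"
  unfolding L2_iff L1_iff wedge_def
  by (metis (no_types, lifting) less_one linorder_not_less mult_eq_0_iff order_less_trans diff_self)

lemma L2_comb[simp]: "\<omega> \<in> L2 n \<Longrightarrow> x \<in> L1 n \<Longrightarrow> y \<in> L1 n \<Longrightarrow> (\<lambda>a b. \<omega> a b + c * wedge x y a b) \<in> L2 n"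
proof -
  assume "\<omega> \<in> L2 n" "x \<in> L1 n" "y \<in> L1 n"
  then have "wedge x y \<in> L2 n" by simp
  with \<open>\<omega> \<in> L2 n\<close> show ?thesis by (auto simp: L2_iff)
qed

lemma L2_add[simp]: "\<omega> \<in> L2 n \<Longrightarrow> x \<in> L1 n \<Longrightarrow> y \<in> L1 n \<Longrightarrow> (\<lambda>a b. \<omega> a b + wedge x y a b) \<in> L2 n"
  using L2_comb[of \<omega> n x y 1] by simp

lemma L1_diff[simp]: "\<theta> \<in> L1 n \<Longrightarrow> x \<in> L1 n \<Longrightarrow> (\<lambda>i. \<theta> i - x i) \<in> L1 n"
  by (auto simp: L1_iff)

lemma L2_diff[simp]: "\<omega> \<in> L2 n \<Longrightarrow> x \<in> L1 n \<Longrightarrow> y \<in> L1 n \<Longrightarrow> (\<lambda>a b. \<omega> a b - wedge x y a b) \<in> L2 n"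
  using L2_comb[of \<omega> n x y "-1"] by simp

lemma fmult_line: "fmult (\<theta>, \<omega>) (\<lambda>i. t * v i, \<lambda>a b. 0) = (\<lambda>i. \<theta> i + t * v i, \<lambda>a b. \<omega> a b + t * wedge \<theta> v a b)"
  by (simp add: fmult_def wedge_def fun_eq_iff algebra_simps)

lemma hline:
  assumes "Ah n f" "\<theta> \<in> L1 n" "\<omega> \<in> L2 n" "v \<in> L1 n"
  shows "f (\<lambda>i. \<theta> i + u * v i, \<lambda>a b. \<omega> a b + u * wedge \<theta> v a b)
       = (1-u) * f (\<theta>, \<omega>) + u * f (\<lambda>i. \<theta> i + v i, \<lambda>a b. \<omega> a b + wedge \<theta> v a b)"
proof -
  have "(\<theta>, \<omega>) \<in> Fn n" using assms by (simp add: Fn_def)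
  then obtain c0 c1 where c: "\<And>t. f (fmult (\<theta>, \<omega>) (\<lambda>i. t * v i, \<lambda>a b. 0)) = c0 + c1 * t"
    using assms(1,4) unfolding Ah_def by blast
  have e: "\<And>t. f (\<lambda>i. \<theta> i + t * v i, \<lambda>a b. \<omega> a b + t * wedge \<theta> v a b) = c0 + c1 * t"
    using c by (simp add: fmult_line)
  from e[of 0] have "f (\<theta>, \<omega>) = c0" by simp
  moreover from e[of 1] have "f (\<lambda>i. \<theta> i + v i, \<lambda>a b. \<omega> a b + wedge \<theta> v a b) = c0 + c1" by simp
  ultimately show ?thesis using e[of u] by (simp add: algebra_simps)
qed

lemma hline2:
  assumes "Ah n f" "\<theta> \<in> L1 n" "\<omega> \<in> L2 n" "v \<in> L1 n"
    and "P = (\<lambda>i. \<theta> i + u * v i, \<lambda>a b. \<omega> a b + u * wedge \<theta> v a b)"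
    and "R = (\<lambda>i. \<theta> i + v i, \<lambda>a b. \<omega> a b + wedge \<theta> v a b)"
  shows "f P = (1-u) * f (\<theta>, \<omega>) + u * f R"
  using hline[OF assms(1-4)] assms(5,6) by simp

lemma cent:
  assumes f: "Ah n f" and th: "\<theta> \<in> L1 n" and om: "\<omega> \<in> L2 n" and x: "x \<in> L1 n" and y: "y \<in> L1 n"
  shows "f (\<theta>, \<lambda>a b. \<omega> a b + c * wedge x y a b)
       = (1-c) * f (\<theta>, \<omega>) + c * f (\<theta>, \<lambda>a b. \<omega> a b + wedge x y a b)"
proof -
  define W where "W = wedge x y"
  define ta where "ta = (\<lambda>i. \<theta> i + x i)"
  define oa where "oa = (\<lambda>a b. \<omega> a b + wedge \<theta> x a b)"
  define tb where "tb = (\<lambda>i. \<theta> i + (-1) * x i)"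
  define ob where "ob = (\<lambda>a b. \<omega> a b + (-1) * wedge \<theta> x a b)"
  have ta: "ta \<in> L1 n" and oa: "oa \<in> L2 n" and tb: "tb \<in> L1 n" and ob: "ob \<in> L2 n"
    using th om x by (simp_all add: ta_def oa_def tb_def ob_def)
  define A0 where "A0 = (ta, oa)"
  define B0 where "B0 = (tb, ob)"
  define A1 where "A1 = (\<lambda>i. ta i + y i, \<lambda>a b. oa a b + wedge ta y a b)"
  define B1 where "B1 = (\<lambda>i. tb i + y i, \<lambda>a b. ob a b + wedge tb y a b)"
  define K where "K = f A1 - f B1 - 2 * f A0 + 2 * f (\<theta>, \<omega>)"
  have key: "2 * f (\<theta>, \<lambda>a b. \<omega> a b + d * W a b) = 2 * f (\<theta>, \<omega>) + d * K" for d
  proof -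
    have D: "f B0 = 2 * f (\<theta>, \<omega>) - f A0"
      using hline[OF f th om x, of "-1"] by (simp add: A0_def B0_def ta_def oa_def tb_def ob_def)
    have LA: "f (\<lambda>i. ta i + d * y i, \<lambda>a b. oa a b + d * wedge ta y a b) = (1-d) * f A0 + d * f A1"
      using hline[OF f ta oa y, of d] by (simp add: A0_def A1_def)
    have LB: "f (\<lambda>i. tb i + (-d) * y i, \<lambda>a b. ob a b + (-d) * wedge tb y a b) = (1-(-d)) * f B0 + (-d) * f B1"
      using hline[OF f tb ob y, of "-d"] by (simp add: B0_def B1_def)
    have om2: "(\<lambda>a b. \<omega> a b + d * W a b) \<in> L2 n" using om x y by (simp add: W_def)
    have xy: "(\<lambda>i. x i + d * y i) \<in> L1 n" using x y by simp
    have LC: "f (\<lambda>i. \<theta> i + (-1) * (x i + d * y i), \<lambda>a b. (\<omega> a b + d * W a b) + (-1) * wedge \<theta> (\<lambda>i. x i + d * y i) a b)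
       = (1-(-1)) * f (\<theta>, \<lambda>a b. \<omega> a b + d * W a b) + (-1) * f (\<lambda>i. \<theta> i + (x i + d * y i), \<lambda>a b. (\<omega> a b + d * W a b) + wedge \<theta> (\<lambda>i. x i + d * y i) a b)"
      using hline[OF f th om2 xy, of "-1"] by simp
    have P1: "(\<lambda>i. \<theta> i + (x i + d * y i), \<lambda>a b. (\<omega> a b + d * W a b) + wedge \<theta> (\<lambda>i. x i + d * y i) a b)
       = (\<lambda>i. ta i + d * y i, \<lambda>a b. oa a b + d * wedge ta y a b)"
      by (simp add: ta_def oa_def W_def wedge_def fun_eq_iff algebra_simps)
    have P2: "(\<lambda>i. \<theta> i + (-1) * (x i + d * y i), \<lambda>a b. (\<omega> a b + d * W a b) + (-1) * wedge \<theta> (\<lambda>i. x i + d * y i) a b)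
       = (\<lambda>i. tb i + (-d) * y i, \<lambda>a b. ob a b + (-d) * wedge tb y a b)"
      by (simp add: tb_def ob_def W_def wedge_def fun_eq_iff algebra_simps)
    have "2 * f (\<theta>, \<lambda>a b. \<omega> a b + d * W a b) = (1-d) * f A0 + d * f A1 + ((1+d) * f B0 - d * f B1)"
      using LA LB LC P1 P2 by (simp add: algebra_simps)
    then show ?thesis using D unfolding K_def by (simp add: algebra_simps)
  qed
  from key[of 1] have K: "K = 2 * f (\<theta>, \<lambda>a b. \<omega> a b + W a b) - 2 * f (\<theta>, \<omega>)" by simp
  from key[of c] have "2 * f (\<theta>, \<lambda>a b. \<omega> a b + c * W a b) = 2 * f (\<theta>, \<omega>) + c * (2 * f (\<theta>, \<lambda>a b. \<omega> a b + W a b) - 2 * f (\<theta>, \<omega>))"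
    unfolding K .
  then show ?thesis unfolding W_def by (simp add: algebra_simps)
qed


section \<open>Heisenberg slices\<close>

definition slice :: "(fpt \<Rightarrow> real) \<Rightarrow> form1 \<Rightarrow> form1 \<Rightarrow> form2 \<Rightarrow> real \<Rightarrow> real \<Rightarrow> real \<Rightarrow> real" where
  "slice f x y \<omega> s t z = f (\<lambda>i. s * x i + t * y i, \<lambda>a b. \<omega> a b + z * wedge x y a b)"

lemma slice_aff:
  assumes f: "Ah n f" and om: "\<omega> \<in> L2 n" and x: "x \<in> L1 n" and y: "y \<in> L1 n"
  shows "slice f x y \<omega> s t z = slice f x y \<omega> 0 0 0 + s * (slice f x y \<omega> 1 0 0 - slice f x y \<omega> 0 0 0)
     + t * (slice f x y \<omega> 0 1 0 - slice f x y \<omega> 0 0 0) + z * (slice f x y \<omega> 0 0 1 - slice f x y \<omega> 0 0 0)"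
proof (rule h1c[where g="slice f x y \<omega>"])
  fix s0 t0 z0 \<alpha> \<beta> u :: real
  define th0 where "th0 = (\<lambda>i. s0 * x i + t0 * y i)"
  define om0 where "om0 = (\<lambda>a b. \<omega> a b + z0 * wedge x y a b)"
  define v where "v = (\<lambda>i. \<alpha> * x i + \<beta> * y i)"
  have m: "th0 \<in> L1 n" "om0 \<in> L2 n" "v \<in> L1 n" using om x y by (simp_all add: th0_def om0_def v_def)
  have h: "f (\<lambda>i. th0 i + u * v i, \<lambda>a b. om0 a b + u * wedge th0 v a b)
       = (1-u) * f (th0, om0) + u * f (\<lambda>i. th0 i + v i, \<lambda>a b. om0 a b + wedge th0 v a b)"
    by (rule hline[OF f m])
  have e1: "(\<lambda>i. th0 i + u * v i, \<lambda>a b. om0 a b + u * wedge th0 v a b)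
     = (\<lambda>i. (s0+u*\<alpha>) * x i + (t0+u*\<beta>) * y i, \<lambda>a b. \<omega> a b + (z0+u*(s0*\<beta>-t0*\<alpha>)) * wedge x y a b)"
    by (simp add: th0_def om0_def v_def wedge_def fun_eq_iff algebra_simps)
  have e2: "(\<lambda>i. th0 i + v i, \<lambda>a b. om0 a b + wedge th0 v a b)
     = (\<lambda>i. (s0+\<alpha>) * x i + (t0+\<beta>) * y i, \<lambda>a b. \<omega> a b + (z0+(s0*\<beta>-t0*\<alpha>)) * wedge x y a b)"
    by (simp add: th0_def om0_def v_def wedge_def fun_eq_iff algebra_simps)
  show "slice f x y \<omega> (s0+u*\<alpha>) (t0+u*\<beta>) (z0+u*(s0*\<beta>-t0*\<alpha>))
        = (1-u)*slice f x y \<omega> s0 t0 z0 + u*slice f x y \<omega> (s0+\<alpha>) (t0+\<beta>) (z0+(s0*\<beta>-t0*\<alpha>))"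
    using h unfolding e1 e2 by (simp add: slice_def th0_def om0_def)
next
  fix s t z u :: real
  define th0 where "th0 = (\<lambda>i. s * x i + t * y i)"
  define om0 where "om0 = (\<lambda>a b. \<omega> a b + z * wedge x y a b)"
  have m: "th0 \<in> L1 n" "om0 \<in> L2 n" using om x y by (simp_all add: th0_def om0_def)
  have h: "f (th0, \<lambda>a b. om0 a b + u * wedge x y a b)
       = (1-u) * f (th0, om0) + u * f (th0, \<lambda>a b. om0 a b + wedge x y a b)"
    by (rule cent[OF f m x y])
  show "slice f x y \<omega> s t (z+u) = (1-u)*slice f x y \<omega> s t z + u*slice f x y \<omega> s t (z+1)"
    using h by (simp add: slice_def th0_def om0_def algebra_simps)
qed

lemma B_add:
  assumes f: "Ah n f" and om: "\<omega> \<in> L2 n" and x: "x \<in> L1 n" and y: "y \<in> L1 n"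
  shows "f (\<lambda>i. x i + y i, \<omega>) = f (x, \<omega>) + f (y, \<omega>) - f (\<lambda>i. 0, \<omega>)"
  using slice_aff[OF f om x y, of 1 1 0] by (simp add: slice_def)

lemma B_smul:
  assumes f: "Ah n f" and om: "\<omega> \<in> L2 n" and x: "x \<in> L1 n"
  shows "f (\<lambda>i. c * x i, \<omega>) = (1-c) * f (\<lambda>i. 0, \<omega>) + c * f (x, \<omega>)"
  using slice_aff[OF f om x x, of c 0 0] by (simp add: slice_def algebra_simps)

lemma mixed_x:
  assumes f: "Ah n f" and om: "\<omega> \<in> L2 n" and x: "x \<in> L1 n" and y: "y \<in> L1 n"
  shows "f (x, \<lambda>a b. \<omega> a b + wedge x y a b) = f (x, \<omega>) + f (\<lambda>i. 0, \<lambda>a b. \<omega> a b + wedge x y a b) - f (\<lambda>i. 0, \<omega>)"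
  using slice_aff[OF f om x y, of 1 0 1] by (simp add: slice_def)

lemma mixed_y:
  assumes f: "Ah n f" and om: "\<omega> \<in> L2 n" and x: "x \<in> L1 n" and y: "y \<in> L1 n"
  shows "f (y, \<lambda>a b. \<omega> a b + wedge x y a b) = f (y, \<omega>) + f (\<lambda>i. 0, \<lambda>a b. \<omega> a b + wedge x y a b) - f (\<lambda>i. 0, \<omega>)"
  using slice_aff[OF f om x y, of 0 1 1] by (simp add: slice_def)


section \<open>Multi-affine expansion\<close>

lemma pow_insert_sum:
  fixes h :: "'a set \<Rightarrow> real"
  assumes "finite S" "q \<notin> S"
  shows "(\<Sum>T\<in>Pow (insert q S). h T) = (\<Sum>T\<in>Pow S. h T) + (\<Sum>T\<in>Pow S. h (insert q T))"
proof -
  have "Pow (insert q S) = Pow S \<union> insert q ` Pow S" by (rule Pow_insert)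
  moreover have "Pow S \<inter> insert q ` Pow S = {}" using assms(2) by auto
  moreover have "inj_on (insert q) (Pow S)" using assms(2) unfolding inj_on_def
    by (metis PowD insert_absorb insert_ident subsetD)
  ultimately show ?thesis using assms(1) by (simp add: sum.union_disjoint sum.reindex)
qed

lemma mixed_sum:
  fixes h :: "'a set \<Rightarrow> real"
  assumes "finite S" "p \<in> S"
  shows "(\<Sum>T\<in>Pow S. (-1::real)^card(S-T) * h T)
       = (\<Sum>T\<in>Pow (S-{p}). (-1)^card(S-{p}-T) * (h (insert p T) - h T))"
proof -
  have S: "insert p (S - {p}) = S" using assms by auto
  have fin: "finite (S - {p})" using assms by simp
  have "(\<Sum>T\<in>Pow S. (-1::real)^card(S-T) * h T)
      = (\<Sum>T\<in>Pow (S-{p}). (-1)^card(S-T) * h T) + (\<Sum>T\<in>Pow (S-{p}). (-1)^card(S - insert p T) * h (insert p T))"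
    using pow_insert_sum[OF fin, of p "\<lambda>T. (-1::real)^card(S-T) * h T"] S by simp
  also have "\<dots> = (\<Sum>T\<in>Pow (S-{p}). (-1)^card(S-{p}-T) * (h (insert p T) - h T))"
  proof -
    have a: "(-1::real)^card(S-T) = - ((-1)^card(S-{p}-T))" if "T \<in> Pow (S-{p})" for T
    proof -
      have "S - T = insert p (S - {p} - T)" using that assms by auto
      then have "card (S - T) = Suc (card (S - {p} - T))" using fin by simp
      then show ?thesis by simp
    qed
    have b: "S - insert p T = S - {p} - T" for T by auto
    show ?thesis unfolding sum.distrib[symmetric]
    proof (rule sum.cong[OF refl])
      fix T assume T: "T \<in> Pow (S-{p})"
      show "(-1::real)^card(S-T) * h T + (-1)^card(S - insert p T) * h (insert p T) = (-1)^card(S-{p}-T) * (h (insert p T) - h T)"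
        unfolding a[OF T] b[of T] by (simp add: algebra_simps)
    qed
  qed
  finally show ?thesis .
qed

lemma multiaff:
  fixes F :: "('p \<Rightarrow> real) \<Rightarrow> real"
  assumes "finite Q" "Q \<subseteq> P"
   and "\<And>x q u. \<forall>p. p \<notin> P \<longrightarrow> x p = 0 \<Longrightarrow> q \<in> P \<Longrightarrow> F (x(q:=u)) = (1-u) * F (x(q:=0)) + u * F (x(q:=1))"
   and "\<forall>p. p \<notin> Q \<longrightarrow> x p = 0"
  shows "F x = (\<Sum>S\<in>Pow Q. (\<Prod>p\<in>S. x p) * (\<Sum>T\<in>Pow S. (-1)^card(S-T) * F (\<lambda>p. if p \<in> T then 1 else 0)))"
  using assms
proof (induction Q arbitrary: F x rule: finite_induct)
  case empty
  then have "x = (\<lambda>p. 0)" by auto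
  then show ?case by simp
next
  case (insert q Q)
  note aff = insert.prems(2)
  have qP: "q \<in> P" using insert.prems(1) by auto
  have QP: "Q \<subseteq> P" using insert.prems(1) by auto
  define F0 where "F0 y = F (y(q:=0))" for y
  define F1 where "F1 y = F (y(q:=1))" for y
  have aff0: "F0 (y(q':=u)) = (1-u) * F0 (y(q':=0)) + u * F0 (y(q':=1))"
    if y: "\<forall>p. p \<notin> P \<longrightarrow> y p = 0" and q': "q' \<in> P" for y q' u
  proof (cases "q' = q")
    case True then show ?thesis by (simp add: F0_def algebra_simps)
  next
    case False
    have y0: "\<forall>p. p \<notin> P \<longrightarrow> (y(q:=0)) p = 0" using y by simp
    have e: "\<And>c. y(q':=c, q:=0) = (y(q:=0))(q':=c)" using False by (simp add: fun_upd_twist)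
    from aff[OF y0 q', of u] show ?thesis by (simp only: F0_def e)
  qed
  have aff1: "F1 (y(q':=u)) = (1-u) * F1 (y(q':=0)) + u * F1 (y(q':=1))"
    if y: "\<forall>p. p \<notin> P \<longrightarrow> y p = 0" and q': "q' \<in> P" for y q' u
  proof (cases "q' = q")
    case True then show ?thesis by (simp add: F1_def algebra_simps)
  next
    case False
    have y0: "\<forall>p. p \<notin> P \<longrightarrow> (y(q:=1)) p = 0" using y qP by simp
    have e: "\<And>c. y(q':=c, q:=1) = (y(q:=1))(q':=c)" using False by (simp add: fun_upd_twist)
    from aff[OF y0 q', of u] show ?thesis by (simp only: F1_def e)
  qed
  define x0 where "x0 = x(q:=0)"
  have x0s: "\<forall>p. p \<notin> Q \<longrightarrow> x0 p = 0" using insert.prems(3) by (auto simp: x0_def)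
  define m where "m S = (\<Prod>p\<in>S. x p)" for S
  define C where "C S = (\<Sum>T\<in>Pow S. (-1::real)^card(S-T) * F (\<lambda>p. if p \<in> T then 1 else 0))" for S
  define C1 where "C1 S = (\<Sum>T\<in>Pow S. (-1::real)^card(S-T) * F (\<lambda>p. if p \<in> insert q T then 1 else 0))" for S
  have IH0: "F (x(q:=0)) = (\<Sum>S\<in>Pow Q. m S * C S)"
  proof -
    have "F0 x0 = (\<Sum>S\<in>Pow Q. (\<Prod>p\<in>S. x0 p) * (\<Sum>T\<in>Pow S. (-1)^card(S-T) * F0 (\<lambda>p. if p \<in> T then 1 else 0)))"
      using insert.IH[OF QP aff0 x0s] by blast
    also have "\<dots> = (\<Sum>S\<in>Pow Q. m S * C S)"
    proof (rule sum.cong[OF refl])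
      fix S assume S: "S \<in> Pow Q"
      then have qS: "q \<notin> S" using insert.hyps(2) by auto
      have "(\<Prod>p\<in>S. x0 p) = m S" unfolding m_def x0_def using qS by (intro prod.cong) auto
      moreover have "F0 (\<lambda>p. if p \<in> T then 1 else 0) = F (\<lambda>p. if p \<in> T then 1 else 0)" if "T \<in> Pow S" for T
      proof -
        have "(\<lambda>p. if p \<in> T then 1 else (0::real))(q:=0) = (\<lambda>p. if p \<in> T then 1 else 0)"
          using that qS by (auto simp: fun_eq_iff)
        then show ?thesis by (simp add: F0_def)
      qed
      ultimately show "(\<Prod>p\<in>S. x0 p) * (\<Sum>T\<in>Pow S. (-1)^card(S-T) * F0 (\<lambda>p. if p \<in> T then 1 else 0)) = m S * C S"
        unfolding C_def by simp
    qed
    finally show ?thesis by (simp add: F0_def x0_def)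
  qed
  have IH1: "F (x(q:=1)) = (\<Sum>S\<in>Pow Q. m S * C1 S)"
  proof -
    have "F1 x0 = (\<Sum>S\<in>Pow Q. (\<Prod>p\<in>S. x0 p) * (\<Sum>T\<in>Pow S. (-1)^card(S-T) * F1 (\<lambda>p. if p \<in> T then 1 else 0)))"
      using insert.IH[OF QP aff1 x0s] by blast
    also have "\<dots> = (\<Sum>S\<in>Pow Q. m S * C1 S)"
    proof (rule sum.cong[OF refl])
      fix S assume S: "S \<in> Pow Q"
      then have qS: "q \<notin> S" using insert.hyps(2) by auto
      have "(\<Prod>p\<in>S. x0 p) = m S" unfolding m_def x0_def using qS by (intro prod.cong) auto
      moreover have "F1 (\<lambda>p. if p \<in> T then 1 else 0) = F (\<lambda>p. if p \<in> insert q T then 1 else 0)" if "T \<in> Pow S" for T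
      proof -
        have "(\<lambda>p. if p \<in> T then 1 else (0::real))(q:=1) = (\<lambda>p. if p \<in> insert q T then 1 else 0)"
          by (auto simp: fun_eq_iff)
        then show ?thesis by (simp add: F1_def)
      qed
      ultimately show "(\<Prod>p\<in>S. x0 p) * (\<Sum>T\<in>Pow S. (-1)^card(S-T) * F1 (\<lambda>p. if p \<in> T then 1 else 0)) = m S * C1 S"
        unfolding C1_def by simp
    qed
    finally show ?thesis by (simp add: F1_def x0_def)
  qed
  have xs: "\<forall>p. p \<notin> P \<longrightarrow> x p = 0" using insert.prems(1,3) by auto
  have main: "F x = (1 - x q) * F (x(q:=0)) + x q * F (x(q:=1))"
  proof -
    have "x(q := x q) = x" by simp
    with aff[OF xs qP, of "x q"] show ?thesis by metis
  qed
  have finQ: "finite Q" by (rule insert.hyps(1))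
  have "(\<Sum>S\<in>Pow (insert q Q). m S * C S) = (\<Sum>S\<in>Pow Q. m S * C S) + (\<Sum>S\<in>Pow Q. m (insert q S) * C (insert q S))"
    by (rule pow_insert_sum[OF finQ insert.hyps(2)])
  also have "(\<Sum>S\<in>Pow Q. m (insert q S) * C (insert q S)) = (\<Sum>S\<in>Pow Q. x q * (m S * (C1 S - C S)))"
  proof (rule sum.cong[OF refl])
    fix S assume S: "S \<in> Pow Q"
    then have qS: "q \<notin> S" using insert.hyps(2) by auto
    have finS: "finite S" using S finQ finite_subset by auto
    have "m (insert q S) = x q * m S" unfolding m_def using finS qS by simp
    moreover have "C (insert q S) = C1 S - C S"
    proof -
      have "C (insert q S) = (\<Sum>T\<in>Pow (insert q S - {q}). (-1)^card(insert q S - {q} - T) *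
          (F (\<lambda>p. if p \<in> insert q T then 1 else 0) - F (\<lambda>p. if p \<in> T then 1 else 0)))"
        unfolding C_def by (rule mixed_sum) (use finS in auto)
      also have "insert q S - {q} = S" using qS by auto
      finally show ?thesis unfolding C_def C1_def
        by (simp add: algebra_simps sum_subtractf)
    qed
    ultimately show "m (insert q S) * C (insert q S) = x q * (m S * (C1 S - C S))" by simp
  qed
  finally have "(\<Sum>S\<in>Pow (insert q Q). m S * C S) = F (x(q:=0)) + x q * (F (x(q:=1)) - F (x(q:=0)))"
    unfolding IH0 IH1 by (simp add: sum_distrib_left algebra_simps sum_subtractf)
  then show ?case unfolding main m_def C_def by (simp add: algebra_simps)
qed


section \<open>Expansion of h-affine functions\<close>

definition Pairs :: "nat \<Rightarrow> (nat \<times> nat) set" where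
  "Pairs n = {p. 1 \<le> fst p \<and> fst p < snd p \<and> snd p \<le> n}"

definition EE :: "(nat \<times> nat) set \<Rightarrow> form2" where
  "EE T = (\<lambda>a b. if (a, b) \<in> T then 1 else 0)"

definition ev :: "nat \<Rightarrow> form1" where
  "ev k = (\<lambda>i. if i = k then 1 else 0)"

definition mono :: "form2 \<Rightarrow> (nat \<times> nat) set \<Rightarrow> real" where
  "mono \<omega> S = (\<Prod>p\<in>S. \<omega> (fst p) (snd p))"

definition coef :: "(fpt \<Rightarrow> real) \<Rightarrow> form1 \<Rightarrow> (nat \<times> nat) set \<Rightarrow> real" where
  "coef f \<theta> S = (\<Sum>T\<in>Pow S. (-1::real)^card(S-T) * f (\<theta>, EE T))"

lemma finite_Pairs[simp]: "finite (Pairs n)"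
proof -
  have "Pairs n \<subseteq> {1..n} \<times> {1..n}" by (auto simp: Pairs_def)
  then show ?thesis using finite_subset by blast
qed

lemma EE_L2: "T \<subseteq> Pairs n \<Longrightarrow> EE T \<in> L2 n"
  by (auto simp: L2_def EE_def Pairs_def split: if_splits)

lemma ev_L1: "1 \<le> k \<Longrightarrow> k \<le> n \<Longrightarrow> ev k \<in> L1 n"
  by (auto simp: L1_def ev_def)

lemma wedge_ev: "a < b \<Longrightarrow> wedge (ev a) (ev b) = EE {(a, b)}"
  by (auto simp: fun_eq_iff wedge_def EE_def ev_def)

lemma EE_insert: "p \<notin> T \<Longrightarrow> EE (insert p T) = (\<lambda>a b. EE T a b + EE {p} a b)"
  by (auto simp: fun_eq_iff EE_def)

lemma wedge_ev_pair: "p \<in> Pairs n \<Longrightarrow> wedge (ev (fst p)) (ev (snd p)) = EE {p}"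
  using wedge_ev[of "fst p" "snd p"] by (simp add: Pairs_def)

lemma ev_pair_L1: "p \<in> Pairs n \<Longrightarrow> ev (fst p) \<in> L1 n \<and> ev (snd p) \<in> L1 n"
  by (auto simp: Pairs_def intro!: ev_L1)

lemma expansion:
  assumes f: "Ah n f" and th: "\<theta> \<in> L1 n" and om: "\<omega> \<in> L2 n"
  shows "f (\<theta>, \<omega>) = (\<Sum>S\<in>Pow (Pairs n). mono \<omega> S * coef f \<theta> S)"
proof -
  define F where "F x = f (\<theta>, \<lambda>a b. x (a, b))" for x :: "nat \<times> nat \<Rightarrow> real"
  define x where "x = (\<lambda>p. \<omega> (fst p) (snd p))"
  have xs: "\<forall>p. p \<notin> Pairs n \<longrightarrow> x p = 0" using om by (auto simp: x_def L2_def Pairs_def)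
  have aff: "F (y(q:=u)) = (1-u) * F (y(q:=0)) + u * F (y(q:=1))"
    if y: "\<forall>p. p \<notin> Pairs n \<longrightarrow> y p = 0" and q: "q \<in> Pairs n" for y q u
  proof -
    define om0 where "om0 = (\<lambda>a b. (y(q:=0)) (a, b))"
    have om0: "om0 \<in> L2 n" using y unfolding om0_def L2_def Pairs_def by auto
    have e: "ev (fst q) \<in> L1 n" "ev (snd q) \<in> L1 n" using ev_pair_L1[OF q] by auto
    have w: "wedge (ev (fst q)) (ev (snd q)) = EE {q}" by (rule wedge_ev_pair[OF q])
    have c: "(\<lambda>a b. (y(q:=c)) (a, b)) = (\<lambda>a b. om0 a b + c * wedge (ev (fst q)) (ev (snd q)) a b)" for c
      unfolding w by (auto simp: fun_eq_iff om0_def EE_def)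
    show ?thesis
      using cent[OF f th om0 e, of u] unfolding F_def c by simp
  qed
  have "F x = (\<Sum>S\<in>Pow (Pairs n). (\<Prod>p\<in>S. x p) * (\<Sum>T\<in>Pow S. (-1)^card(S-T) * F (\<lambda>p. if p \<in> T then 1 else 0)))"
    by (rule multiaff[OF finite_Pairs subset_refl aff xs]) auto
  moreover have "F x = f (\<theta>, \<omega>)" by (simp add: F_def x_def)
  moreover have "F (\<lambda>p. if p \<in> T then 1 else 0) = f (\<theta>, EE T)" for T
    by (simp add: F_def EE_def)
  ultimately show ?thesis by (simp add: mono_def coef_def x_def)
qed


section \<open>Structure of the coefficients\<close>

lemma bracket:
  assumes f: "Ah n f" and th: "\<theta> \<in> L1 n" and om: "\<omega> \<in> L2 n"
    and xp: "xp \<in> L1 n" and yp: "yp \<in> L1 n" and xq: "xq \<in> L1 n" and yq: "yq \<in> L1 n"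
    and x: "x \<in> L1 n" and y: "y \<in> L1 n"
    and W: "wedge x y = (\<lambda>a b. wedge xp yp a b + wedge xq yq a b)"
  shows "f (\<theta>, \<lambda>a b. \<omega> a b + wedge xp yp a b + wedge xq yq a b) - f (\<theta>, \<lambda>a b. \<omega> a b + wedge xp yp a b)
     - f (\<theta>, \<lambda>a b. \<omega> a b + wedge xq yq a b) + f (\<theta>, \<omega>) = 0"
proof -
  define F where "F c1 c2 = f (\<theta>, \<lambda>a b. \<omega> a b + c1 * wedge xp yp a b + c2 * wedge xq yq a b)" for c1 c2
  have a1: "F c1 c2 = (1-c1) * F 0 c2 + c1 * F 1 c2" for c1 c2
  proof -
    have m: "(\<lambda>a b. \<omega> a b + c2 * wedge xq yq a b) \<in> L2 n" using om xq yq by simp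
    show ?thesis using cent[OF f th m xp yp, of c1] by (simp add: F_def add_ac)
  qed
  have a2: "F c1 c2 = (1-c2) * F c1 0 + c2 * F c1 1" for c1 c2
  proof -
    have m: "(\<lambda>a b. \<omega> a b + c1 * wedge xp yp a b) \<in> L2 n" using om xp yp by simp
    show ?thesis using cent[OF f th m xq yq, of c2] by (simp add: F_def add_ac)
  qed
  have dg: "F c c = (1-c) * F 0 0 + c * F 1 1" for c
  proof -
    have e: "(\<lambda>a b. \<omega> a b + c * wedge x y a b) = (\<lambda>a b. \<omega> a b + c * wedge xp yp a b + c * wedge xq yq a b)" for c
      unfolding W by (simp add: algebra_simps)
    have e1: "(\<lambda>a b. \<omega> a b + wedge x y a b) = (\<lambda>a b. \<omega> a b + wedge xp yp a b + wedge xq yq a b)"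
      unfolding W by (simp add: algebra_simps)
    show ?thesis using cent[OF f th om x y, of c] unfolding e e1 by (simp add: F_def)
  qed
  have "F 1 1 - F 1 0 - F 0 1 + F 0 0 = 0"
    using a1[of "-1" "-1"] a2[of 0 "-1"] a2[of 1 "-1"] dg[of "-1"] by simp
  then show ?thesis by (simp add: F_def)
qed

lemma share_wedge:
  assumes p: "p \<in> Pairs n" and q: "q \<in> Pairs n" and pq: "p \<noteq> q"
    and sh: "{fst p, snd p} \<inter> {fst q, snd q} \<noteq> {}"
  shows "\<exists>x y. x \<in> L1 n \<and> y \<in> L1 n \<and> wedge x y = (\<lambda>a b. EE {p} a b + EE {q} a b)"
proof -
  obtain a b where pab: "p = (a, b)" by (cases p)
  obtain c d where qcd: "q = (c, d)" by (cases q)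
  have r: "1 \<le> a" "a < b" "b \<le> n" "1 \<le> c" "c < d" "d \<le> n" using p q by (auto simp: Pairs_def pab qcd)
  have ne: "(a, b) \<noteq> (c, d)" using pq pab qcd by simp
  have evs: "ev a \<in> L1 n" "ev b \<in> L1 n" "ev c \<in> L1 n" "ev d \<in> L1 n" using r by (auto intro!: ev_L1)
  consider "a = c" | "b = d" | "b = c" | "a = d" using sh pab qcd by auto
  then show ?thesis
  proof cases
    case 1
    have "wedge (ev a) (\<lambda>i. ev b i + ev d i) = (\<lambda>a' b'. EE {p} a' b' + EE {q} a' b')"
      using r ne 1 by (auto simp: fun_eq_iff wedge_def EE_def ev_def pab qcd)
    then show ?thesis using evs by (intro exI[of _ "ev a"] exI[of _ "\<lambda>i. ev b i + ev d i"]) simp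
  next
    case 2
    have "wedge (\<lambda>i. ev a i + ev c i) (ev b) = (\<lambda>a' b'. EE {p} a' b' + EE {q} a' b')"
      using r ne 2 by (auto simp: fun_eq_iff wedge_def EE_def ev_def pab qcd)
    then show ?thesis using evs by (intro exI[of _ "\<lambda>i. ev a i + ev c i"] exI[of _ "ev b"]) simp
  next
    case 3
    have "wedge (ev b) (\<lambda>i. ev d i - ev a i) = (\<lambda>a' b'. EE {p} a' b' + EE {q} a' b')"
      using r ne 3 by (auto simp: fun_eq_iff wedge_def EE_def ev_def pab qcd)
    then show ?thesis using evs by (intro exI[of _ "ev b"] exI[of _ "\<lambda>i. ev d i - ev a i"]) simp
  next
    case 4
    have "wedge (ev a) (\<lambda>i. ev b i - ev c i) = (\<lambda>a' b'. EE {p} a' b' + EE {q} a' b')"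
      using r ne 4 by (auto simp: fun_eq_iff wedge_def EE_def ev_def pab qcd)
    then show ?thesis using evs by (intro exI[of _ "ev a"] exI[of _ "\<lambda>i. ev b i - ev c i"]) simp
  qed
qed

lemma bracketE:
  assumes f: "Ah n f" and th: "\<theta> \<in> L1 n" and R: "R \<subseteq> Pairs n"
    and p: "p \<in> Pairs n" and q: "q \<in> Pairs n" and pq: "p \<noteq> q"
    and sh: "{fst p, snd p} \<inter> {fst q, snd q} \<noteq> {}" and pR: "p \<notin> R" and qR: "q \<notin> R"
  shows "f (\<theta>, EE (insert p (insert q R))) - f (\<theta>, EE (insert q R)) - f (\<theta>, EE (insert p R)) + f (\<theta>, EE R) = 0"
proof -
  obtain x y where xy: "x \<in> L1 n" "y \<in> L1 n" "wedge x y = (\<lambda>a b. EE {p} a b + EE {q} a b)"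
    using share_wedge[OF p q pq sh] by blast
  have ep: "ev (fst p) \<in> L1 n" "ev (snd p) \<in> L1 n" using ev_pair_L1[OF p] by auto
  have eq: "ev (fst q) \<in> L1 n" "ev (snd q) \<in> L1 n" using ev_pair_L1[OF q] by auto
  have W: "wedge x y = (\<lambda>a b. wedge (ev (fst p)) (ev (snd p)) a b + wedge (ev (fst q)) (ev (snd q)) a b)"
    using xy(3) wedge_ev_pair[OF p] wedge_ev_pair[OF q] by simp
  have b: "f (\<theta>, \<lambda>a b. EE R a b + wedge (ev (fst p)) (ev (snd p)) a b + wedge (ev (fst q)) (ev (snd q)) a b)
     - f (\<theta>, \<lambda>a b. EE R a b + wedge (ev (fst p)) (ev (snd p)) a b)
     - f (\<theta>, \<lambda>a b. EE R a b + wedge (ev (fst q)) (ev (snd q)) a b) + f (\<theta>, EE R) = 0"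
    by (rule bracket[OF f th EE_L2[OF R] ep eq xy(1,2) W])
  have e1: "(\<lambda>a b. EE R a b + wedge (ev (fst p)) (ev (snd p)) a b + wedge (ev (fst q)) (ev (snd q)) a b) = EE (insert p (insert q R))"
    unfolding wedge_ev_pair[OF p] wedge_ev_pair[OF q] using pR qR pq by (auto simp: fun_eq_iff EE_def)
  have e2: "(\<lambda>a b. EE R a b + wedge (ev (fst p)) (ev (snd p)) a b) = EE (insert p R)"
    unfolding wedge_ev_pair[OF p] using pR by (auto simp: fun_eq_iff EE_def)
  have e3: "(\<lambda>a b. EE R a b + wedge (ev (fst q)) (ev (snd q)) a b) = EE (insert q R)"
    unfolding wedge_ev_pair[OF q] using qR by (auto simp: fun_eq_iff EE_def)
  show ?thesis using b unfolding e1 e2 e3 by linarith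
qed

lemma coef_nonmatch:
  assumes f: "Ah n f" and th: "\<theta> \<in> L1 n" and S: "S \<subseteq> Pairs n"
    and pS: "p \<in> S" and qS: "q \<in> S" and pq: "p \<noteq> q"
    and sh: "{fst p, snd p} \<inter> {fst q, snd q} \<noteq> {}"
  shows "coef f \<theta> S = 0"
proof -
  have finS: "finite S" using finite_subset[OF S finite_Pairs] .
  define h where "h T = f (\<theta>, EE T)" for T
  have "coef f \<theta> S = (\<Sum>T\<in>Pow (S-{p}). (-1)^card(S-{p}-T) * (h (insert p T) - h T))"
    unfolding coef_def h_def by (rule mixed_sum[OF finS pS])
  also have "\<dots> = (\<Sum>R\<in>Pow (S-{p}-{q}). (-1)^card(S-{p}-{q}-R) *
       ((h (insert p (insert q R)) - h (insert q R)) - (h (insert p R) - h R)))"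
    by (rule mixed_sum) (use finS qS pq in auto)
  also have "\<dots> = 0"
  proof (rule sum.neutral, rule ballI)
    fix R assume R: "R \<in> Pow (S-{p}-{q})"
    have "h (insert p (insert q R)) - h (insert q R) - h (insert p R) + h R = 0"
      unfolding h_def
      by (rule bracketE[OF f th _ _ _ pq sh]) (use R S pS qS in auto)
    then show "(-1)^card(S-{p}-{q}-R) * ((h (insert p (insert q R)) - h (insert q R)) - (h (insert p R) - h R)) = 0"
      by simp
  qed
  finally show ?thesis .
qed

definition bco :: "(fpt \<Rightarrow> real) \<Rightarrow> form1 \<Rightarrow> (nat \<times> nat) set \<Rightarrow> real" where
  "bco f \<theta> S = coef f \<theta> S - coef f (\<lambda>i. 0) S"

lemma bco_sum: "bco f \<theta> S = (\<Sum>T\<in>Pow S. (-1::real)^card(S-T) * (f (\<theta>, EE T) - f (\<lambda>i. 0, EE T)))"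
  by (simp add: bco_def coef_def sum_subtractf right_diff_distrib)

lemma bco_add:
  assumes f: "Ah n f" and S: "S \<subseteq> Pairs n" and x: "x \<in> L1 n" and y: "y \<in> L1 n"
  shows "bco f (\<lambda>i. x i + y i) S = bco f x S + bco f y S"
  unfolding bco_sum sum.distrib[symmetric]
proof (rule sum.cong[OF refl])
  fix T assume "T \<in> Pow S"
  then have "EE T \<in> L2 n" using S by (auto intro!: EE_L2)
  from B_add[OF f this x y] have h: "f (\<lambda>i. x i + y i, EE T) - f (\<lambda>i. 0, EE T) = (f (x, EE T) - f (\<lambda>i. 0, EE T)) + (f (y, EE T) - f (\<lambda>i. 0, EE T))"
    by simp
  show "(-1::real)^card(S-T) * (f (\<lambda>i. x i + y i, EE T) - f (\<lambda>i. 0, EE T))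
     = (-1)^card(S-T) * (f (x, EE T) - f (\<lambda>i. 0, EE T)) + (-1)^card(S-T) * (f (y, EE T) - f (\<lambda>i. 0, EE T))"
    unfolding h by (simp add: algebra_simps)
qed

lemma bco_smul:
  assumes f: "Ah n f" and S: "S \<subseteq> Pairs n" and x: "x \<in> L1 n"
  shows "bco f (\<lambda>i. c * x i) S = c * bco f x S"
  unfolding bco_sum sum_distrib_left
proof (rule sum.cong[OF refl])
  fix T assume "T \<in> Pow S"
  then have "EE T \<in> L2 n" using S by (auto intro!: EE_L2)
  from B_smul[OF f this x, of c] have h: "f (\<lambda>i. c * x i, EE T) - f (\<lambda>i. 0, EE T) = c * (f (x, EE T) - f (\<lambda>i. 0, EE T))"
    by (simp add: algebra_simps)
  show "(-1::real)^card(S-T) * (f (\<lambda>i. c * x i, EE T) - f (\<lambda>i. 0, EE T))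
     = c * ((-1)^card(S-T) * (f (x, EE T) - f (\<lambda>i. 0, EE T)))"
    unfolding h by (simp add: algebra_simps)
qed

lemma bco_cover:
  assumes f: "Ah n f" and S: "S \<subseteq> Pairs n" and pS: "p \<in> S" and i: "i = fst p \<or> i = snd p"
  shows "bco f (ev i) S = 0"
proof -
  have finS: "finite S" using finite_subset[OF S finite_Pairs] .
  have p: "p \<in> Pairs n" using S pS by auto
  have ep: "ev (fst p) \<in> L1 n" "ev (snd p) \<in> L1 n" using ev_pair_L1[OF p] by auto
  define h where "h T = f (ev i, EE T) - f (\<lambda>i. 0, EE T)" for T
  have "bco f (ev i) S = (\<Sum>T\<in>Pow (S-{p}). (-1)^card(S-{p}-T) * (h (insert p T) - h T))"
    unfolding bco_sum h_def by (rule mixed_sum[OF finS pS])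
  also have "\<dots> = 0"
  proof (rule sum.neutral, rule ballI)
    fix T assume T: "T \<in> Pow (S-{p})"
    have om: "EE T \<in> L2 n" using T S by (auto intro!: EE_L2)
    have e: "EE (insert p T) = (\<lambda>a b. EE T a b + wedge (ev (fst p)) (ev (snd p)) a b)"
      unfolding wedge_ev_pair[OF p] using T by (auto simp: fun_eq_iff EE_def)
    have "h (insert p T) = h T"
      using i
    proof
      assume "i = fst p"
      then show ?thesis unfolding h_def e using mixed_x[OF f om ep] by simp
    next
      assume "i = snd p"
      then show ?thesis unfolding h_def e using mixed_y[OF f om ep] by simp
    qed
    then show "(-1)^card(S-{p}-T) * (h (insert p T) - h T) = 0" by simp
  qed
  finally show ?thesis .
qed

lemma lin_decomp:
  assumes add: "\<And>x y. x \<in> L1 n \<Longrightarrow> y \<in> L1 n \<Longrightarrow> \<phi> (\<lambda>i. x i + y i) = \<phi> x + \<phi> y"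
    and smul: "\<And>x c. x \<in> L1 n \<Longrightarrow> \<phi> (\<lambda>i. c * x i) = c * \<phi> x"
    and th: "\<theta> \<in> L1 n"
  shows "\<phi> \<theta> = (\<Sum>i\<in>{1..n}. \<theta> i * \<phi> (ev i))"
proof -
  define tr where "tr m = (\<lambda>j. if j \<le> m then \<theta> j else 0)" for m
  have trL: "tr m \<in> L1 n" for m using th by (auto simp: tr_def L1_iff)
  have "m \<le> n \<Longrightarrow> \<phi> (tr m) = (\<Sum>i\<in>{1..m}. \<theta> i * \<phi> (ev i))" for m
  proof (induction m)
    case 0
    have "tr 0 = (\<lambda>j. 0 * \<theta> j)" using th by (auto simp: tr_def fun_eq_iff L1_iff)
    then show ?case using smul[OF th, of 0] by simp
  next
    case (Suc m)
    have evL: "ev (Suc m) \<in> L1 n" using Suc.prems by (intro ev_L1) auto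
    have "tr (Suc m) = (\<lambda>j. tr m j + \<theta> (Suc m) * ev (Suc m) j)"
      by (auto simp: tr_def ev_def fun_eq_iff le_Suc_eq)
    then have "\<phi> (tr (Suc m)) = \<phi> (tr m) + \<phi> (\<lambda>j. \<theta> (Suc m) * ev (Suc m) j)"
      using add[OF trL, of "\<lambda>j. \<theta> (Suc m) * ev (Suc m) j"] evL by simp
    also have "\<dots> = \<phi> (tr m) + \<theta> (Suc m) * \<phi> (ev (Suc m))" using smul[OF evL] by simp
    finally show ?case using Suc by simp
  qed
  moreover have "tr n = \<theta>" using th by (auto simp: tr_def fun_eq_iff L1_iff)
  ultimately show ?thesis by auto
qed

lemma bco_zero_cover:
  assumes f: "Ah n f" and S: "S \<subseteq> Pairs n" and th: "\<theta> \<in> L1 n"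
    and cov: "\<forall>i\<in>{1..n}. \<exists>p\<in>S. i = fst p \<or> i = snd p"
  shows "bco f \<theta> S = 0"
proof -
  have "bco f \<theta> S = (\<Sum>i\<in>{1..n}. \<theta> i * bco f (ev i) S)"
    by (rule lin_decomp[where \<phi>="\<lambda>\<theta>. bco f \<theta> S"]) (use bco_add[OF f S] bco_smul[OF f S] th in auto)
  also have "\<dots> = 0"
    by (rule sum.neutral) (use cov bco_cover[OF f S] in fastforce)
  finally show ?thesis .
qed


section \<open>Matchings and index lists\<close>

definition matching :: "nat \<Rightarrow> (nat \<times> nat) set \<Rightarrow> bool" where
  "matching n S \<longleftrightarrow> S \<subseteq> Pairs n \<and> (\<forall>p\<in>S. \<forall>q\<in>S. p \<noteq> q \<longrightarrow> {fst p, snd p} \<inter> {fst q, snd q} = {})"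

lemma matching_card:
  assumes "matching n S"
  shows "card (\<Union>p\<in>S. {fst p, snd p}) = 2 * card S" and "(\<Union>p\<in>S. {fst p, snd p}) \<subseteq> {1..n}"
proof -
  have S: "S \<subseteq> Pairs n" using assms by (simp add: matching_def)
  have fin: "finite S" using finite_subset[OF S finite_Pairs] .
  have "card (\<Union>p\<in>S. {fst p, snd p}) = (\<Sum>p\<in>S. card {fst p, snd p})"
    by (rule card_UN_disjoint) (use fin assms in \<open>auto simp: matching_def\<close>)
  also have "\<dots> = (\<Sum>p\<in>S. 2)"
  proof (rule sum.cong[OF refl])
    fix p assume "p \<in> S"
    then have "fst p < snd p" using S by (auto simp: Pairs_def)
    then show "card {fst p, snd p} = 2" by simp
  qed
  finally show "card (\<Union>p\<in>S. {fst p, snd p}) = 2 * card S" by simp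
  show "(\<Union>p\<in>S. {fst p, snd p}) \<subseteq> {1..n}" using S by (auto simp: Pairs_def)
qed

lemma matching_le: "matching n S \<Longrightarrow> 2 * card S \<le> n"
  using matching_card[of n S] card_mono[of "{1..n}" "\<Union>p\<in>S. {fst p, snd p}"] by simp

lemma matching_cover:
  assumes m: "matching n S" and le: "n \<le> 2 * card S"
  shows "\<forall>i\<in>{1..n}. \<exists>p\<in>S. i = fst p \<or> i = snd p"
proof (rule ccontr)
  assume "\<not> ?thesis"
  then obtain i where i: "i \<in> {1..n}" and ni: "\<forall>p\<in>S. i \<noteq> fst p \<and> i \<noteq> snd p" by blast
  have "(\<Union>p\<in>S. {fst p, snd p}) \<subseteq> {1..n} - {i}" using matching_card(2)[OF m] ni by auto
  then have "card (\<Union>p\<in>S. {fst p, snd p}) \<le> card ({1..n} - {i})" by (intro card_mono) auto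
  also have "\<dots> = n - 1" using i by simp
  finally show False using matching_card(1)[OF m] le i by simp
qed

lemma coef_nonmatching:
  assumes f: "Ah n f" and th: "\<theta> \<in> L1 n" and S: "S \<subseteq> Pairs n" and nm: "\<not> matching n S"
  shows "coef f \<theta> S = 0"
proof -
  obtain p q where "p \<in> S" "q \<in> S" "p \<noteq> q" "{fst p, snd p} \<inter> {fst q, snd q} \<noteq> {}"
    using nm S unfolding matching_def by blast
  then show ?thesis using coef_nonmatch[OF f th S] by blast
qed

lemma lexless_eq: "lexless = (<)"
  by (auto simp: fun_eq_iff lexless_def less_prod_def')

lemma Iset_props:
  assumes "I \<in> Iset n k"
  shows "distinct I" "sorted I" "matching n (set I)" "card (set I) = k"
proof -
  have len: "length I = k" and rng: "\<forall>p\<in>set I. 1 \<le> fst p \<and> fst p < snd p \<and> snd p \<le> n"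
    and srt: "sorted_wrt (<) I"
    and dj: "\<forall>i<k. \<forall>j<k. i \<noteq> j \<longrightarrow> {fst (I!i), snd (I!i)} \<inter> {fst (I!j), snd (I!j)} = {}"
    using assms by (auto simp: Iset_def lexless_eq)
  show d: "distinct I" and "sorted I" using srt by (simp_all add: strict_sorted_iff)
  show "card (set I) = k" using d len by (simp add: distinct_card)
  show "matching n (set I)"
    unfolding matching_def
  proof (intro conjI ballI impI)
    show "set I \<subseteq> Pairs n" using rng by (auto simp: Pairs_def)
  next
    fix p q assume p: "p \<in> set I" and q: "q \<in> set I" and pq: "p \<noteq> q"
    obtain i where i: "i < k" "p = I!i" using p len by (auto simp: in_set_conv_nth)
    obtain j where j: "j < k" "q = I!j" using q len by (auto simp: in_set_conv_nth)
    have "i \<noteq> j" using i j pq by auto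
    then show "{fst p, snd p} \<inter> {fst q, snd q} = {}" using dj i j by auto
  qed
qed

lemma Iset_bij: "bij_betw set (Iset n k) {S. matching n S \<and> card S = k}"
  unfolding bij_betw_def
proof
  show "inj_on set (Iset n k)"
    by (rule inj_onI) (metis Iset_props(1,2) sorted_distinct_set_unique)
  show "set ` Iset n k = {S. matching n S \<and> card S = k}"
  proof
    show "set ` Iset n k \<subseteq> {S. matching n S \<and> card S = k}" using Iset_props by auto
  next
    show "{S. matching n S \<and> card S = k} \<subseteq> set ` Iset n k"
    proof
      fix S assume "S \<in> {S. matching n S \<and> card S = k}"
      then have m: "matching n S" and c: "card S = k" by auto
      have S: "S \<subseteq> Pairs n" using m by (simp add: matching_def)
      have fin: "finite S" using finite_subset[OF S finite_Pairs] .
      define I where "I = sorted_list_of_set S"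
      have sI: "set I = S" using fin by (simp add: I_def)
      have dI: "distinct I" and soI: "sorted I" by (simp_all add: I_def)
      have lI: "length I = k" using fin c by (simp add: I_def)
      have "I \<in> Iset n k"
        unfolding Iset_def lexless_eq
      proof (intro CollectI conjI allI impI)
        show "length I = k" by (rule lI)
        show "\<forall>p\<in>set I. 1 \<le> fst p \<and> fst p < snd p \<and> snd p \<le> n" using S sI by (auto simp: Pairs_def)
        show "sorted_wrt (<) I" using dI soI by (simp add: strict_sorted_iff)
        fix i j assume i: "i < k" and j: "j < k" and ij: "i \<noteq> j"
        have "I!i \<noteq> I!j" using dI i j ij lI by (simp add: nth_eq_iff_index_eq)
        moreover have "I!i \<in> S" "I!j \<in> S" using i j lI sI by auto
        ultimately show "{fst (I!i), snd (I!i)} \<inter> {fst (I!j), snd (I!j)} = {}"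
          using m by (auto simp: matching_def)
      qed
      then show "S \<in> set ` Iset n k" using sI by blast
    qed
  qed
qed

lemma omegaI_mono: "distinct I \<Longrightarrow> omegaI \<omega> I = mono \<omega> (set I)"
  by (simp add: omegaI_def mono_def prod.distinct_set_conv_list)


section \<open>The dilation polynomial\<close>

definition fsd :: "(fpt \<Rightarrow> real) \<Rightarrow> nat \<Rightarrow> nat \<Rightarrow> fpt \<Rightarrow> real" where
  "fsd f n j p = (if even j then (\<Sum>I\<in>Iset n (j div 2). coef f (\<lambda>i. 0) (set I) * omegaI (snd p) I)
                  else (\<Sum>I\<in>Iset n (j div 2). bco f (fst p) (set I) * omegaI (snd p) I))"

lemma L2_smul[simp]: "\<omega> \<in> L2 n \<Longrightarrow> (\<lambda>a b. c * \<omega> a b) \<in> L2 n"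
  by (auto simp: L2_iff)

lemma sum_even_odd: "(\<Sum>j<2*m. F j) = (\<Sum>k<m. F (2*k) + F (2*k+1))" for F :: "nat \<Rightarrow> real"
  by (induction m) (simp_all add: algebra_simps)

lemma finite_Iset: "finite (Iset n k)"
proof -
  have "finite {S. matching n S \<and> card S = k}"
    by (rule finite_subset[of _ "Pow (Pairs n)"]) (auto simp: matching_def)
  then show ?thesis using bij_betw_finite[OF Iset_bij] by blast
qed

lemma dil_poly:
  assumes f: "Ah n f" and p: "p \<in> Fn n"
  shows "f (dil t p) = (\<Sum>j\<le>n. fsd f n j p * t^j)"
proof -
  obtain \<theta> \<omega> where pe: "p = (\<theta>, \<omega>)" by (cases p)
  have th: "\<theta> \<in> L1 n" and om: "\<omega> \<in> L2 n" using p pe by (auto simp: Fn_def)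
  define M where "M = {S. matching n S}"
  have MP: "M \<subseteq> Pow (Pairs n)" by (auto simp: M_def matching_def)
  have finM: "finite M" using finite_subset[OF MP] by simp
  define h where "h S = t^(2 * card S) * mono \<omega> S * (coef f (\<lambda>i. 0) S + t * bco f \<theta> S)" for S
  define m where "m = n div 2 + 1"
  have "f (dil t p) = (\<Sum>S\<in>Pow (Pairs n). mono (\<lambda>a b. t^2 * \<omega> a b) S * coef f (\<lambda>i. t * \<theta> i) S)"
    unfolding pe dil_def using expansion[OF f L1_smul[OF th] L2_smul[OF om]] by simp
  also have "\<dots> = (\<Sum>S\<in>M. mono (\<lambda>a b. t^2 * \<omega> a b) S * coef f (\<lambda>i. t * \<theta> i) S)"
    by (rule sum.mono_neutral_right) (use MP coef_nonmatching[OF f L1_smul[OF th]] in \<open>auto simp: M_def\<close>)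
  also have "\<dots> = (\<Sum>S\<in>M. h S)"
  proof (rule sum.cong[OF refl])
    fix S assume "S \<in> M"
    then have S: "S \<subseteq> Pairs n" using MP by auto
    have fin: "finite S" using finite_subset[OF S finite_Pairs] .
    have "mono (\<lambda>a b. t^2 * \<omega> a b) S = t^(2 * card S) * mono \<omega> S"
      unfolding mono_def using fin by (simp add: prod.distrib power_mult)
    moreover have "coef f (\<lambda>i. t * \<theta> i) S = coef f (\<lambda>i. 0) S + t * bco f \<theta> S"
      using bco_smul[OF f S th, of t] by (simp add: bco_def)
    ultimately show "mono (\<lambda>a b. t^2 * \<omega> a b) S * coef f (\<lambda>i. t * \<theta> i) S = h S"
      by (simp add: h_def)
  qed
  also have "\<dots> = (\<Sum>k<m. \<Sum>S\<in>{S\<in>M. card S = k}. h S)"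
  proof (rule sum.group[symmetric, OF finM finite_lessThan])
    show "card ` M \<subseteq> {..<m}" using matching_le by (auto simp: M_def m_def) (metis div_le_mono le_imp_less_Suc nonzero_mult_div_cancel_left zero_neq_numeral)
  qed
  also have "\<dots> = (\<Sum>k<m. fsd f n (2*k) p * t^(2*k) + fsd f n (2*k+1) p * t^(2*k+1))"
  proof (rule sum.cong[OF refl])
    fix k
    have "(\<Sum>S\<in>{S\<in>M. card S = k}. h S) = (\<Sum>I\<in>Iset n k. h (set I))"
      using sum.reindex_bij_betw[OF Iset_bij[of n k], of h] by (simp add: M_def)
    also have "\<dots> = (\<Sum>I\<in>Iset n k. coef f (\<lambda>i. 0) (set I) * omegaI \<omega> I * t^(2*k)
                 + bco f \<theta> (set I) * omegaI \<omega> I * t^(2*k+1))"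
    proof (rule sum.cong[OF refl])
      fix I assume I: "I \<in> Iset n k"
      show "h (set I) = coef f (\<lambda>i. 0) (set I) * omegaI \<omega> I * t^(2*k) + bco f \<theta> (set I) * omegaI \<omega> I * t^(2*k+1)"
        unfolding h_def omegaI_mono[OF Iset_props(1)[OF I]] Iset_props(4)[OF I]
        by (simp add: algebra_simps)
    qed
    also have "\<dots> = fsd f n (2*k) p * t^(2*k) + fsd f n (2*k+1) p * t^(2*k+1)"
      by (simp add: fsd_def pe sum.distrib sum_distrib_right)
    finally show "(\<Sum>S\<in>{S\<in>M. card S = k}. h S) = fsd f n (2*k) p * t^(2*k) + fsd f n (2*k+1) p * t^(2*k+1)" .
  qed
  also have "\<dots> = (\<Sum>j<2*m. fsd f n j p * t^j)"
    by (rule sum_even_odd[symmetric])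
  also have "\<dots> = (\<Sum>j\<le>n. fsd f n j p * t^j)"
  proof (cases "even n")
    case False
    then have "2*m = Suc n" by (simp add: m_def)
    then show ?thesis by (simp add: lessThan_Suc_atMost)
  next
    case True
    then have m2: "2*m = Suc (Suc n)" by (simp add: m_def)
    have "fsd f n (Suc n) p = 0"
    proof -
      have "fsd f n (Suc n) p = (\<Sum>I\<in>Iset n (n div 2). bco f \<theta> (set I) * omegaI \<omega> I)"
        using True by (simp add: fsd_def pe)
      also have "\<dots> = 0"
      proof (rule sum.neutral, rule ballI)
        fix I assume I: "I \<in> Iset n (n div 2)"
        have m: "matching n (set I)" and c: "card (set I) = n div 2" using Iset_props[OF I] by auto
        have S: "set I \<subseteq> Pairs n" using m by (simp add: matching_def)
        have "n \<le> 2 * card (set I)" using c True by simp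
        then have "bco f \<theta> (set I) = 0"
          using bco_zero_cover[OF f S th matching_cover[OF m]] by simp
        then show "bco f \<theta> (set I) * omegaI \<omega> I = 0" by simp
      qed
      finally show ?thesis .
    qed
    then show ?thesis unfolding m2 by (simp add: lessThan_Suc_atMost)
  qed
  finally show ?thesis .
qed


lemma ah_gen:
  assumes f: "Ah n f" and P: "P \<in> Fn n" and v: "v \<in> L1 n"
  shows "f (fmult P (\<lambda>i. u * v i, \<lambda>a b. 0)) = (1-u) * f P + u * f (fmult P (\<lambda>i. 1 * v i, \<lambda>a b. 0))"
proof -
  obtain \<theta> \<omega> where pe: "P = (\<theta>, \<omega>)" by (cases P)
  have th: "\<theta> \<in> L1 n" and om: "\<omega> \<in> L2 n" using P pe by (auto simp: Fn_def)
  show ?thesis unfolding pe fmult_line using hline[OF f th om v, of u] by simp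
qed

lemma fmult_Fn: "P \<in> Fn n \<Longrightarrow> v \<in> L1 n \<Longrightarrow> fmult P (\<lambda>i. u * v i, \<lambda>a b. 0) \<in> Fn n"
  by (cases P) (simp add: fmult_line Fn_def)

lemma dil_Fn: "P \<in> Fn n \<Longrightarrow> dil t P \<in> Fn n"
  by (cases P) (simp add: dil_def Fn_def)

lemma fsd_Ah:
  assumes f: "Ah n f" and jn: "j \<le> n"
  shows "Ah n (fsd f n j)"
  unfolding Ah_def
proof (intro ballI)
  fix P \<theta>' assume P: "P \<in> Fn n" and v: "\<theta>' \<in> L1 n"
  define q where "q s = fmult P (\<lambda>i. s * \<theta>' i, \<lambda>a b. 0)" for s
  have qF: "q s \<in> Fn n" for s unfolding q_def by (rule fmult_Fn[OF P v])
  have q0: "q 0 = P" unfolding q_def by (cases P) (simp add: fmult_def wedge_def fun_eq_iff)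
  have dq: "dil t (q s) = fmult (dil t P) (\<lambda>i. (t*s) * \<theta>' i, \<lambda>a b. 0)" for t s
    unfolding q_def by (cases P) (simp add: dil_def fmult_def wedge_def fun_eq_iff algebra_simps power2_eq_square)
  define A where "A t = f (dil t P)" for t
  define Z where "Z t = f (fmult (dil t P) (\<lambda>i. 1 * \<theta>' i, \<lambda>a b. 0))" for t
  have E: "f (dil t (q s)) = (1 - t*s) * A t + (t*s) * Z t" for t s
    unfolding dq A_def Z_def by (rule ah_gen[OF f dil_Fn[OF P] v])
  have E2: "f (dil t (q s)) = (1 - s) * f (dil t (q 0)) + s * f (dil t (q 1))" for t s
  proof -
    have z: "t * Z t = f (dil t (q 1)) - (1 - t) * A t" using E[of t 1] by (simp add: algebra_simps)
    have "f (dil t (q s)) = (1 - t*s) * A t + s * (t * Z t)" using E[of t s] by (simp add: algebra_simps)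
    then show ?thesis unfolding z q0 A_def by (simp add: algebra_simps)
  qed
  have C: "fsd f n j (q s) = (1 - s) * fsd f n j (q 0) + s * fsd f n j (q 1)" for s
  proof -
    have "\<forall>t. (\<Sum>j\<le>n. fsd f n j (q s) * t^j) = (\<Sum>j\<le>n. ((1 - s) * fsd f n j (q 0) + s * fsd f n j (q 1)) * t^j)"
    proof
      fix t
      have "(\<Sum>j\<le>n. fsd f n j (q s) * t^j) = f (dil t (q s))" using dil_poly[OF f qF] by simp
      also have "\<dots> = (1 - s) * f (dil t (q 0)) + s * f (dil t (q 1))" by (rule E2)
      also have "\<dots> = (\<Sum>j\<le>n. ((1 - s) * fsd f n j (q 0) + s * fsd f n j (q 1)) * t^j)"
      proof -
        have "(\<Sum>j\<le>n. ((1 - s) * fsd f n j (q 0) + s * fsd f n j (q 1)) * t^j)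
            = (\<Sum>j\<le>n. (1 - s) * (fsd f n j (q 0) * t^j) + s * (fsd f n j (q 1) * t^j))"
          by (rule sum.cong) (simp_all add: algebra_simps)
        also have "\<dots> = (1 - s) * (\<Sum>j\<le>n. fsd f n j (q 0) * t^j) + s * (\<Sum>j\<le>n. fsd f n j (q 1) * t^j)"
          by (simp add: sum.distrib sum_distrib_left)
        finally show ?thesis unfolding dil_poly[OF f qF] by simp
      qed
      finally show "(\<Sum>j\<le>n. fsd f n j (q s) * t^j) = (\<Sum>j\<le>n. ((1 - s) * fsd f n j (q 0) + s * fsd f n j (q 1)) * t^j)" .
    qed
    then show ?thesis
      using polyfun_eq_coeffs[where c="\<lambda>j. fsd f n j (q s)" and n=n and d="\<lambda>j. (1 - s) * fsd f n j (q 0) + s * fsd f n j (q 1)"] jn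
      by simp
  qed
  show "\<exists>c0 c1. \<forall>t. fsd f n j (fmult P (\<lambda>i. t * \<theta>' i, \<lambda>a b. 0)) = c0 + c1 * t"
  proof (intro exI allI)
    fix t
    show "fsd f n j (fmult P (\<lambda>i. t * \<theta>' i, \<lambda>a b. 0)) = fsd f n j (q 0) + (fsd f n j (q 1) - fsd f n j (q 0)) * t"
      using C[of t] unfolding q_def by (simp add: algebra_simps)
  qed
qed

theorem proposition4p2:
  fixes n :: nat and f :: "fpt \<Rightarrow> real"
  assumes "n \<ge> 3" and "Ah n f"
  shows "\<exists>fs :: nat \<Rightarrow> fpt \<Rightarrow> real.
      (\<forall>p \<in> Fn n. \<forall>t::real. t > 0 \<longrightarrow> f (dil t p) = (\<Sum>j\<le>n. fs j p * t ^ j))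
    \<and> (\<forall>j \<le> n. Ah n (fs j))
    \<and> (\<forall>p \<in> Fn n. f p = (\<Sum>j\<le>n. fs j p))
    \<and> (\<forall>k \<le> n div 2. \<exists>a :: (nat \<times> nat) list \<Rightarrow> real.
          \<forall>p \<in> Fn n. fs (2*k) p = (\<Sum>I \<in> Iset n k. a I * omegaI (snd p) I))
    \<and> (\<forall>k \<le> (n - 1) div 2. \<exists>b :: (nat \<times> nat) list \<Rightarrow> form1 \<Rightarrow> real.
          (\<forall>I \<in> Iset n k. lin1 n (b I)) \<and>
          (\<forall>p \<in> Fn n. fs (2*k+1) p = (\<Sum>I \<in> Iset n k. b I (fst p) * omegaI (snd p) I)))"
proof (intro exI[of _ "fsd f n"] conjI allI ballI impI)
  note f = assms(2)
  show "f (dil t p) = (\<Sum>j\<le>n. fsd f n j p * t ^ j)" if "p \<in> Fn n" for p t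
    by (rule dil_poly[OF f that])
  show "Ah n (fsd f n j)" if "j \<le> n" for j
    by (rule fsd_Ah[OF f that])
  show "f p = (\<Sum>j\<le>n. fsd f n j p)" if "p \<in> Fn n" for p
  proof -
    have "dil 1 p = p" by (cases p) (simp add: dil_def)
    then show ?thesis using dil_poly[OF f that, of 1] by simp
  qed
  show "\<exists>a :: (nat \<times> nat) list \<Rightarrow> real. \<forall>p \<in> Fn n. fsd f n (2*k) p = (\<Sum>I \<in> Iset n k. a I * omegaI (snd p) I)" for k
    by (intro exI[of _ "\<lambda>I. coef f (\<lambda>i. 0) (set I)"]) (simp add: fsd_def)
  show "\<exists>b :: (nat \<times> nat) list \<Rightarrow> form1 \<Rightarrow> real.
          (\<forall>I \<in> Iset n k. lin1 n (b I)) \<and>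
          (\<forall>p \<in> Fn n. fsd f n (2*k+1) p = (\<Sum>I \<in> Iset n k. b I (fst p) * omegaI (snd p) I))" for k
  proof (intro exI[of _ "\<lambda>I \<theta>. bco f \<theta> (set I)"] conjI ballI)
    fix I assume I: "I \<in> Iset n k"
    have S: "set I \<subseteq> Pairs n" using Iset_props(3)[OF I] by (simp add: matching_def)
    show "lin1 n (\<lambda>\<theta>. bco f \<theta> (set I))"
      unfolding lin1_def using bco_add[OF f S] bco_smul[OF f S] by simp
  next
    fix p
    show "fsd f n (2*k+1) p = (\<Sum>I \<in> Iset n k. bco f (fst p) (set I) * omegaI (snd p) I)"
      by (simp add: fsd_def)
  qed
qed

end
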